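(* Let $a>0$, let $q$ be a continuous complex-valued function on $[-a,a]$, and let $K(x,t)$ be the solution of the Goursat problem $\big(\partial_x^{2}-q(x)\big)K=\partial_t^{2}K$, $K(x,x)=\frac12\int_0^x q(s)\,ds$, $K(x,-x)=0$. For $h\in\mathbb{C}$ define $$\mathbf{K}(x,t;h)=\frac{h}{2}+K(x,t)+\frac{h}{2}\int_{t}^{x}\big(K(x,s)-K(x,-s)\big)\,ds.$$ Then for all $h,h_1\in\mathbb{C}$, $$\mathbf{K}(x,t;h)=\frac{h-h_1}{2}+\mathbf{K}(x,t;h_1)+\frac{h-h_1}{2}\int_t^x\big(\mathbf{K}(x,s;h_1)-\mathbf{K}(x,-s;h_1)\big)\,ds.$$ *)

theory Defs
  imports "HOL-Analysis.Analysis"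
begin

definition goursat_dom :: "real \<Rightarrow> (real \<times> real) set" where
  "goursat_dom a = {(x, t). \<bar>t\<bar> \<le> \<bar>x\<bar> \<and> \<bar>x\<bar> \<le> a}"

definition goursat_int :: "real \<Rightarrow> (real \<times> real) set" where
  "goursat_int a = {(x, t). \<bar>t\<bar> < \<bar>x\<bar> \<and> \<bar>x\<bar> < a}"

definition test_fun ::
  "(real \<times> real) set \<Rightarrow> (real \<Rightarrow> real \<Rightarrow> real) \<Rightarrow> (real \<Rightarrow> real \<Rightarrow> real) \<Rightarrow>
   (real \<Rightarrow> real \<Rightarrow> real) \<Rightarrow> (real \<Rightarrow> real \<Rightarrow> real) \<Rightarrow> (real \<Rightarrow> real \<Rightarrow> real) \<Rightarrow> bool" where
  "test_fun U \<phi> \<phi>x \<phi>xx \<phi>t \<phi>tt \<longleftrightarrow>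
     (\<forall>x t. ((\<lambda>y. \<phi> y t) has_real_derivative \<phi>x x t) (at x) \<and>
            ((\<lambda>y. \<phi>x y t) has_real_derivative \<phi>xx x t) (at x) \<and>
            ((\<lambda>s. \<phi> x s) has_real_derivative \<phi>t x t) (at t) \<and>
            ((\<lambda>s. \<phi>t x s) has_real_derivative \<phi>tt x t) (at t)) \<and>
     continuous_on UNIV (\<lambda>(x, t). \<phi> x t) \<and>
     continuous_on UNIV (\<lambda>(x, t). \<phi>x x t) \<and>
     continuous_on UNIV (\<lambda>(x, t). \<phi>t x t) \<and>
     continuous_on UNIV (\<lambda>(x, t). \<phi>xx x t) \<and>
     continuous_on UNIV (\<lambda>(x, t). \<phi>tt x t) \<and>
     compact (closure {(x, t). \<phi> x t \<noteq> 0}) \<and>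
     closure {(x, t). \<phi> x t \<noteq> 0} \<subseteq> U"

text \<open>K is the (generalized, continuous) solution of the Goursat problem
  (d_x^2 - q(x)) K = d_t^2 K,  K(x,x) = 1/2 int_0^x q,  K(x,-x) = 0,
  on |t| <= |x| <= a; the equation is understood in the sense of distributions
  on the interior of the domain (for merely continuous q, K need not be C^2).\<close>
definition goursat_solution ::
  "real \<Rightarrow> (real \<Rightarrow> complex) \<Rightarrow> (real \<Rightarrow> real \<Rightarrow> complex) \<Rightarrow> bool" where
  "goursat_solution a q K \<longleftrightarrow>
     continuous_on (goursat_dom a) (\<lambda>(x, t). K x t) \<and>
     (\<forall>x\<in>{-a..a}. K x x = (LBINT s=0..x. q s) / 2 \<and> K x (-x) = 0) \<and>
     (\<forall>\<phi> \<phi>x \<phi>xx \<phi>t \<phi>tt. test_fun (goursat_int a) \<phi> \<phi>x \<phi>xx \<phi>t \<phi>tt \<longrightarrow>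
        (LINT x|lborel. LINT t|lborel.
           K x t * complex_of_real (\<phi>xx x t - \<phi>tt x t) - q x * K x t * complex_of_real (\<phi> x t)) = 0)"

text \<open>The kernel bold-K(x,t;h); the integral is oriented (from t to x).\<close>
definition bigK :: "(real \<Rightarrow> real \<Rightarrow> complex) \<Rightarrow> real \<Rightarrow> real \<Rightarrow> complex \<Rightarrow> complex" where
  "bigK K x t h = h / 2 + K x t + h / 2 * (LBINT s=t..x. K x s - K x (-s))"

end

theory Submission
  imports Defs
begin

lemma odd_int_zero:
  fixes D :: "real \<Rightarrow> complex"
  assumes "\<And>r. D (-r) = - D r"
  shows "(LBINT r=ereal s..ereal (-s). D r) = 0"
proof -
  have "(LBINT r=ereal s..ereal (-s). D r) = (LBINT r=-ereal (-s)..-ereal s. D (-r))"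
    by (rule interval_integral_reflect)
  also have "\<dots> = (LBINT r=ereal s..ereal (-s). - D r)" using assms by simp
  also have "\<dots> = - (LBINT r=ereal s..ereal (-s). D r)"
    by (rule interval_lebesgue_integral_uminus)
  finally show ?thesis by simp
qed

lemma integrable_sub:
  fixes D :: "real \<Rightarrow> complex"
  assumes "continuous_on {-c..c} D" "\<bar>u\<bar> \<le> c" "\<bar>v\<bar> \<le> c"
  shows "interval_lebesgue_integrable lborel (ereal u) (ereal v) D"
proof (cases "u \<le> v")
  case True
  then show ?thesis using assms
    by (intro interval_integrable_continuous_on) (auto elim!: continuous_on_subset)
next
  case False
  then have "interval_lebesgue_integrable lborel (ereal v) (ereal u) D" using assms
    by (intro interval_integrable_continuous_on) (auto elim!: continuous_on_subset)
  then show ?thesis by (simp add: interval_integrable_endpoints_reverse)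
qed

theorem mainTheorem3:
  fixes a :: real and q :: "real \<Rightarrow> complex" and K :: "real \<Rightarrow> real \<Rightarrow> complex"
    and h h1 :: complex and x t :: real
  assumes "a > 0"
    and "continuous_on {-a..a} q"
    and "goursat_solution a q K"
    and "(x, t) \<in> goursat_dom a"
  shows "bigK K x t h = (h - h1) / 2 + bigK K x t h1
           + (h - h1) / 2 * (LBINT s=t..x. bigK K x s h1 - bigK K x (-s) h1)"
proof -
  define c where "c = \<bar>x\<bar>"
  define D where "D = (\<lambda>r. K x r - K x (-r))"
  have xa: "\<bar>x\<bar> \<le> a" "\<bar>t\<bar> \<le> c" using assms(4) by (auto simp: goursat_dom_def c_def)
  have cK: "continuous_on (goursat_dom a) (\<lambda>(x, t). K x t)"
    using assms(3) by (simp add: goursat_solution_def)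
  have c1: "continuous_on {-c..c} (\<lambda>r. K x r)"
  proof -
    have "continuous_on {-c..c} ((\<lambda>(x, t). K x t) \<circ> (\<lambda>r. (x, r)))"
      by (rule continuous_on_compose[OF _ continuous_on_subset[OF cK]])
        (auto intro!: continuous_intros simp: goursat_dom_def c_def xa)
    then show ?thesis by (simp add: o_def)
  qed
  have c2: "continuous_on {-c..c} (\<lambda>r. K x (-r))"
  proof -
    have "continuous_on {-c..c} ((\<lambda>(x, t). K x t) \<circ> (\<lambda>r. (x, -r)))"
      by (rule continuous_on_compose[OF _ continuous_on_subset[OF cK]])
        (auto intro!: continuous_intros simp: goursat_dom_def c_def xa)
    then show ?thesis by (simp add: o_def)
  qed
  have cD: "continuous_on {-c..c} D" unfolding D_def
    by (intro continuous_intros c1 c2)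
  have oddD: "\<And>r. D (-r) = - D r" by (simp add: D_def)
  have xc: "\<bar>x\<bar> \<le> c" by (simp add: c_def)
  have I: "(LBINT r=ereal s..ereal x. D r) = (LBINT r=ereal (-s)..ereal x. D r)"
    if "\<bar>s\<bar> \<le> c" for s
  proof -
    have int: "interval_lebesgue_integrable lborel (min (ereal s) (min (ereal (-s)) (ereal x)))
        (max (ereal s) (max (ereal (-s)) (ereal x))) D"
    proof -
      have "min (ereal s) (min (ereal (-s)) (ereal x)) = ereal (min s (min (-s) x))"
           "max (ereal s) (max (ereal (-s)) (ereal x)) = ereal (max s (max (-s) x))"
        by (simp_all add: min_def max_def)
      moreover have "interval_lebesgue_integrable lborel (ereal (min s (min (-s) x))) (ereal (max s (max (-s) x))) D"
        using that xc by (intro integrable_sub[OF cD]) auto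
      ultimately show ?thesis by simp
    qed
    have "(LBINT r=ereal s..ereal (-s). D r) + (LBINT r=ereal (-s)..ereal x. D r) = (LBINT r=ereal s..ereal x. D r)"
      by (rule interval_integral_sum[OF int])
    then show ?thesis using odd_int_zero[of D s, OF oddD] by simp
  qed
  have eq: "(LBINT s=ereal t..ereal x. bigK K x s h1 - bigK K x (-s) h1) = (LBINT s=ereal t..ereal x. D s)"
  proof (rule interval_integral_cong)
    fix s assume "s \<in> einterval (min (ereal t) (ereal x)) (max (ereal t) (ereal x))"
    then have "min t x < s" "s < max t x" by (auto simp: einterval_iff min_def max_def split: if_splits)
    then have "\<bar>s\<bar> \<le> c" using xa xc by auto
    from I[OF this] show "bigK K x s h1 - bigK K x (-s) h1 = D s"
      unfolding bigK_def D_def by simp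
  qed
  show ?thesis
    unfolding eq unfolding bigK_def D_def[symmetric]
    by (simp add: field_simps)
qed

end
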